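(* Let $d\ge1$ and let $\mathfrak{T}:\mathcal{S}(\mathbb{R}^{2d})\to\mathcal{S}'(\mathbb{R}^{2d})$ be a non-zero continuous linear operator such that there is a function $\Phi:\mathbb{R}^{4d}\to\mathbb{R}^{4d}$ with $\mathfrak{T}\rho(\lambda)F=c\,\rho(\Phi(\lambda))\mathfrak{T}F$ for all $\lambda\in\mathbb{R}^{4d}$, $F\in\mathcal{S}(\mathbb{R}^{2d})$ (with constants $c\in\mathbb{C}$ possibly depending on $\lambda$). Let $$H=\{\nu\in\mathbb{R}^{4d}:\ \exists\, c_\nu\in\mathbb{C}\text{ with }\rho(\nu)\mathfrak{T}F=c_\nu\mathfrak{T}F\text{ for all }F\in\mathcal{S}(\mathbb{R}^{2d})\}$$ and let $q_H:\mathbb{R}^{4d}\to\mathbb{R}^{4d}/H$ be the quotient map. Then $q_H\circ\Phi:\mathbb{R}^{4d}\to\mathbb{R}^{4d}/H$ is one-to-one.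
   Context: For $x,\omega,t\in\mathbb{R}^{2d}$: $T_xF(t)=F(t-x)$, $M_\omega F(t)=e^{2\pi i\omega\cdot t}F(t)$, and for $(x,\omega)\in\mathbb{R}^{4d}$, $\rho(x,\omega)=T_{x/2}M_\omega T_{x/2}$, acting on $\mathcal{S}(\mathbb{R}^{2d})$ and by duality on $\mathcal{S}'(\mathbb{R}^{2d})$. $H$ is a subgroup of $\mathbb{R}^{4d}$. Continuity of $\mathfrak{T}$ is from the Schwartz topology to the weak* topology. *)

theory Defs
  imports "HOL-Analysis.Analysis"
begin

type_synonym ('n) fn = "real^('n::finite) \<Rightarrow> complex"

definition dir_deriv :: "real^('n::finite) \<Rightarrow> 'n fn \<Rightarrow> 'n fn" where
  "dir_deriv v f x = vector_derivative (\<lambda>t::real. f (x + t *\<^sub>R v)) (at 0)"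

fun iter_deriv :: "(real^('n::finite)) list \<Rightarrow> 'n fn \<Rightarrow> 'n fn" where
  "iter_deriv [] f = f"
| "iter_deriv (v # vs) f = dir_deriv v (iter_deriv vs f)"

definition schwartz :: "('n::finite) fn \<Rightarrow> bool" where
  "schwartz f \<longleftrightarrow>
     (\<forall>vs. set vs \<subseteq> Basis \<longrightarrow> (\<forall>x. iter_deriv vs f differentiable (at x))) \<and>
     (\<forall>vs m. set vs \<subseteq> Basis \<longrightarrow>
        bounded (range (\<lambda>x. ((1 + norm x) ^ m) *\<^sub>R iter_deriv vs f x)))"

definition schwartz_seminorm :: "nat \<Rightarrow> ('n::finite) fn \<Rightarrow> real" where
  "schwartz_seminorm N f =
     (SUP p \<in> UNIV \<times> {vs. length vs \<le> N \<and> set vs \<subseteq> Basis}.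
        (1 + norm (fst p)) ^ N * norm (iter_deriv (snd p) f (fst p)))"

type_synonym 'n distr = "'n fn \<Rightarrow> complex"

definition tempered :: "('n::finite) distr \<Rightarrow> bool" where
  "tempered u \<longleftrightarrow>
     (\<forall>f g a b. schwartz f \<longrightarrow> schwartz g \<longrightarrow>
        u (\<lambda>t. a * f t + b * g t) = a * u f + b * u g) \<and>
     (\<exists>C N. \<forall>g. schwartz g \<longrightarrow> norm (u g) \<le> C * schwartz_seminorm N g)"

definition distr_eq :: "('n::finite) distr \<Rightarrow> 'n distr \<Rightarrow> bool" where
  "distr_eq u v \<longleftrightarrow> (\<forall>g. schwartz g \<longrightarrow> u g = v g)"

definition transl :: "real^('n::finite) \<Rightarrow> 'n fn \<Rightarrow> 'n fn" where
  "transl x F = (\<lambda>t. F (t - x))"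

definition modul :: "real^('n::finite) \<Rightarrow> 'n fn \<Rightarrow> 'n fn" where
  "modul w F = (\<lambda>t. cis (2 * pi * (w \<bullet> t)) * F t)"

definition rho :: "(real^('n::finite)) \<times> (real^'n) \<Rightarrow> 'n fn \<Rightarrow> 'n fn" where
  "rho l = transl ((1/2) *\<^sub>R fst l) \<circ> modul (snd l) \<circ> transl ((1/2) *\<^sub>R fst l)"

text \<open>Action on distributions by duality (bilinear pairing): the transpose of
  rho(x,w) with respect to the pairing \<integral> F g is rho(-x,w).\<close>
definition rho_distr :: "(real^('n::finite)) \<times> (real^'n) \<Rightarrow> 'n distr \<Rightarrow> 'n distr" where
  "rho_distr l u = (\<lambda>g. u (rho (- fst l, snd l) g))"

text \<open>Continuous linear operators S -> S' (weak* topology on S').\<close>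
definition cont_lin_op :: "(('n::finite) fn \<Rightarrow> 'n distr) \<Rightarrow> bool" where
  "cont_lin_op T \<longleftrightarrow>
     (\<forall>F. schwartz F \<longrightarrow> tempered (T F)) \<and>
     (\<forall>F G a b. schwartz F \<longrightarrow> schwartz G \<longrightarrow>
        distr_eq (T (\<lambda>t. a * F t + b * G t)) (\<lambda>g. a * T F g + b * T G g)) \<and>
     (\<forall>g. schwartz g \<longrightarrow>
        (\<exists>C N. \<forall>F. schwartz F \<longrightarrow> norm (T F g) \<le> C * schwartz_seminorm N F))"

definition H_of :: "(('n::finite) fn \<Rightarrow> 'n distr) \<Rightarrow> ((real^'n) \<times> (real^'n)) set" where
  "H_of T = {\<nu>. \<exists>c. \<forall>F. schwartz F \<longrightarrow> distr_eq (rho_distr \<nu> (T F)) (\<lambda>g. c * T F g)}"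

definition quot_map :: "('a::ab_group_add) set \<Rightarrow> 'a \<Rightarrow> 'a set" where
  "quot_map H a = (\<lambda>h. a + h) ` H"

end

theory Submission
  imports Defs
begin


definition good :: "('n::finite) fn \<Rightarrow> bool" where
  "good f \<longleftrightarrow> (\<forall>x. f differentiable (at x)) \<and>
     (\<forall>m. bounded (range (\<lambda>x. ((1 + norm x) ^ m) *\<^sub>R f x)))"

lemma schwartz_good: "schwartz f \<longleftrightarrow> (\<forall>vs. set vs \<subseteq> Basis \<longrightarrow> good (iter_deriv vs f))"
  unfolding schwartz_def good_def by blast

lemma bnd_iff: "bounded (range h) \<longleftrightarrow> (\<exists>B. \<forall>x. norm (h x) \<le> B)"
  unfolding bounded_iff by auto

lemma iter_deriv_transl: "iter_deriv vs (transl a f) = transl a (iter_deriv vs f)"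
proof (induction vs)
  case Nil then show ?case by simp
next
  case (Cons v vs)
  show ?case
  proof
    fix y
    have "(\<lambda>t. transl a (iter_deriv vs f) (y + t *\<^sub>R v)) = (\<lambda>t. iter_deriv vs f (y - a + t *\<^sub>R v))"
      by (simp add: transl_def algebra_simps)
    then show "iter_deriv (v # vs) (transl a f) y = transl a (iter_deriv (v # vs) f) y"
      using Cons by (simp add: dir_deriv_def transl_def)
  qed
qed

lemma good_transl:
  assumes "good f" shows "good (transl a f)"
  unfolding good_def
proof safe
  fix x
  have "f differentiable (at ((\<lambda>t. t - a) x))" using assms good_def by blast
  moreover have "(\<lambda>t. t - a) differentiable (at x)" by (intro derivative_intros)
  ultimately have "(f \<circ> (\<lambda>t. t - a)) differentiable (at x)"
    using differentiable_chain_at by blast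
  then show "transl a f differentiable (at x)" by (simp add: transl_def o_def)
next
  fix m
  obtain B where B: "\<And>x. norm (((1 + norm x) ^ m) *\<^sub>R f x) \<le> B"
    using assms unfolding good_def bnd_iff by blast
  have "norm (((1 + norm y) ^ m) *\<^sub>R transl a f y) \<le> (1 + norm a) ^ m * B" for y
  proof -
    have "1 + norm y \<le> (1 + norm a) * (1 + norm (y - a))"
      using norm_triangle_sub[of y a] by (simp add: algebra_simps norm_minus_commute)
        (smt (verit) mult_nonneg_nonneg norm_ge_zero)
    then have h: "(1 + norm y) ^ m \<le> ((1 + norm a) * (1 + norm (y - a))) ^ m"
      by (intro power_mono) auto
    have "norm (((1 + norm y) ^ m) *\<^sub>R transl a f y) = (1 + norm y) ^ m * norm (f (y - a))"
      by (simp add: transl_def)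
    also have "\<dots> \<le> ((1 + norm a) * (1 + norm (y - a))) ^ m * norm (f (y - a))"
      by (intro mult_right_mono h) auto
    also have "\<dots> = (1 + norm a) ^ m * norm (((1 + norm (y - a)) ^ m) *\<^sub>R f (y - a))"
      by (simp add: power_mult_distrib)
    also have "\<dots> \<le> (1 + norm a) ^ m * B"
      by (intro mult_left_mono B) auto
    finally show ?thesis .
  qed
  then show "bounded (range (\<lambda>x. ((1 + norm x) ^ m) *\<^sub>R transl a f x))"
    unfolding bnd_iff by blast
qed

lemma schwartz_transl: "schwartz f \<Longrightarrow> schwartz (transl a f)"
  unfolding schwartz_good iter_deriv_transl using good_transl by blast

definition comb :: "(complex \<times> (real^('n::finite)) list) list \<Rightarrow> 'n fn \<Rightarrow> 'n fn" where
  "comb L F t = (\<Sum>p\<leftarrow>L. fst p * iter_deriv (snd p) F t)"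

lemma comb_Nil[simp]: "comb [] F t = 0" by (simp add: comb_def)
lemma comb_Cons[simp]: "comb (p # L) F t = fst p * iter_deriv (snd p) F t + comb L F t"
  by (simp add: comb_def)
lemma comb_append[simp]: "comb (L1 @ L2) F t = comb L1 F t + comb L2 F t"
  by (simp add: comb_def)
lemma comb_scale: "comb (map (\<lambda>p. (k * fst p, snd p)) L) F t = k * comb L F t"
  by (induction L) (auto simp: algebra_simps)

lemma DD:
  assumes "G differentiable (at x)"
  shows "((\<lambda>s. G (x + s *\<^sub>R v)) has_vector_derivative dir_deriv v G x) (at 0)"
proof -
  obtain G' where G': "(G has_derivative G') (at x)" using assms differentiable_def by blast
  have "((\<lambda>s::real. x + s *\<^sub>R v) has_derivative (\<lambda>s. s *\<^sub>R v)) (at 0)"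
    by (auto intro!: derivative_eq_intros)
  moreover have "(G has_derivative G') (at ((\<lambda>s::real. x + s *\<^sub>R v) 0))" using G' by simp
  ultimately have "((\<lambda>s. G (x + s *\<^sub>R v)) has_derivative (\<lambda>s. G' (s *\<^sub>R v))) (at 0)"
    using has_derivative_compose by blast
  moreover have "(\<lambda>s. G' (s *\<^sub>R v)) = (\<lambda>s. s *\<^sub>R G' v)"
    using G' has_derivative_linear linear_scale by blast
  ultimately have h: "((\<lambda>s. G (x + s *\<^sub>R v)) has_vector_derivative G' v) (at 0)"
    by (simp add: has_vector_derivative_def)
  then have "dir_deriv v G x = G' v"
    unfolding dir_deriv_def by (rule vector_derivative_at)
  with h show ?thesis by simp
qed

lemma comb_vd:
  assumes "schwartz F" "\<forall>p\<in>set L. set (snd p) \<subseteq> Basis"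
  shows "((\<lambda>s. comb L F (x + s *\<^sub>R v)) has_vector_derivative
           comb (map (\<lambda>p. (fst p, v # snd p)) L) F x) (at 0)"
  using assms(2)
proof (induction L)
  case Nil then show ?case by (simp add: has_vector_derivative_const)
next
  case (Cons p L)
  have "iter_deriv (snd p) F differentiable (at x)"
    using assms(1) Cons.prems unfolding schwartz_def by simp
  from DD[OF this, of v] have "((\<lambda>s. iter_deriv (snd p) F (x + s *\<^sub>R v)) has_vector_derivative
      iter_deriv (v # snd p) F x) (at 0)" by simp
  then show ?case using Cons
    by (auto intro!: derivative_eq_intros)
qed

definition ee :: "real^('n::finite) \<Rightarrow> real^'n \<Rightarrow> complex" where
  "ee w t = cis (2 * pi * (w \<bullet> t))"

lemma ee_vd: "((\<lambda>s. ee w (x + s *\<^sub>R v)) has_vector_derivative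
   ee w x * (\<i> * of_real (2 * pi * (w \<bullet> v)))) (at 0)"
proof -
  have "((\<lambda>s::real. 2 * pi * (w \<bullet> (x + s *\<^sub>R v))) has_derivative (\<lambda>s. s * (2 * pi * (w \<bullet> v)))) (at 0)"
    by (auto intro!: derivative_eq_intros simp: inner_add_right algebra_simps)
  from has_derivative_cis[OF this] show ?thesis
    unfolding has_vector_derivative_def ee_def
    by (simp add: scaleR_conv_of_real algebra_simps)
qed

lemma iter_deriv_modul:
  assumes "schwartz F"
  shows "set vs \<subseteq> Basis \<Longrightarrow> \<exists>L. (\<forall>p\<in>set L. set (snd p) \<subseteq> Basis) \<and>
    iter_deriv vs (modul w F) = (\<lambda>t. ee w t * comb L F t)"
proof (induction vs)
  case Nil
  show ?case by (rule exI[of _ "[(1, [])]"]) (simp add: modul_def ee_def)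
next
  case (Cons v vs)
  then obtain L where L: "\<forall>p\<in>set L. set (snd p) \<subseteq> Basis"
    and eq: "iter_deriv vs (modul w F) = (\<lambda>t. ee w t * comb L F t)" by auto
  define k where "k = \<i> * of_real (2 * pi * (w \<bullet> v))"
  define L' where "L' = map (\<lambda>p. (fst p, v # snd p)) L @
     map (\<lambda>p. (k * fst p, snd p)) L"
  have "dir_deriv v (\<lambda>t. ee w t * comb L F t) x = ee w x * comb L' F x" for x
  proof -
    have "((\<lambda>s. ee w (x + s *\<^sub>R v) * comb L F (x + s *\<^sub>R v)) has_vector_derivative
       ee w x * comb (map (\<lambda>p. (fst p, v # snd p)) L) F x +
       ee w x * k * comb L F x) (at 0)"
      using has_vector_derivative_mult[OF ee_vd comb_vd[OF assms L]] by (simp add: k_def)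
    moreover have "ee w x * comb L' F x = ee w x * comb (map (\<lambda>p. (fst p, v # snd p)) L) F x +
       ee w x * k * comb L F x"
      by (simp only: L'_def comb_append comb_scale) (simp add: algebra_simps)
    ultimately show ?thesis unfolding dir_deriv_def
      by (subst vector_derivative_at) auto
  qed
  moreover have "\<forall>p\<in>set L'. set (snd p) \<subseteq> Basis" using L Cons.prems unfolding L'_def by fastforce
  ultimately show ?case using eq by (intro exI[of _ L']) auto
qed

lemma good_comb:
  assumes "schwartz F" "\<forall>p\<in>set L. set (snd p) \<subseteq> Basis"
  shows "good (comb L F)"
  using assms(2)
proof (induction L)
  case Nil
  have "comb [] F = (\<lambda>_. 0)" by auto
  then show ?case by (simp add: good_def)
next
  case (Cons p L)
  have gp: "good (iter_deriv (snd p) F)" using assms(1) Cons.prems schwartz_good by auto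
  have gL: "good (comb L F)" using Cons by auto
  have eq: "comb (p # L) F = (\<lambda>t. fst p * iter_deriv (snd p) F t + comb L F t)" by auto
  show ?case unfolding eq good_def
  proof safe
    fix x show "(\<lambda>t. fst p * iter_deriv (snd p) F t + comb L F t) differentiable (at x)"
      using gp gL unfolding good_def by (auto intro!: derivative_intros)
  next
    fix m
    obtain B1 where B1: "\<And>x. norm (((1 + norm x) ^ m) *\<^sub>R iter_deriv (snd p) F x) \<le> B1"
      using gp unfolding good_def bnd_iff by blast
    obtain B2 where B2: "\<And>x. norm (((1 + norm x) ^ m) *\<^sub>R comb L F x) \<le> B2"
      using gL unfolding good_def bnd_iff by blast
    have "norm (((1 + norm x) ^ m) *\<^sub>R (fst p * iter_deriv (snd p) F x + comb L F x))
       \<le> norm (fst p) * B1 + B2" for x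
    proof -
      have "norm (((1 + norm x) ^ m) *\<^sub>R (fst p * iter_deriv (snd p) F x + comb L F x))
        \<le> norm (fst p) * norm (((1 + norm x) ^ m) *\<^sub>R iter_deriv (snd p) F x)
          + norm (((1 + norm x) ^ m) *\<^sub>R comb L F x)"
      proof -
        have "((1 + norm x) ^ m) *\<^sub>R (fst p * iter_deriv (snd p) F x + comb L F x) =
          fst p * (((1 + norm x) ^ m) *\<^sub>R iter_deriv (snd p) F x) + ((1 + norm x) ^ m) *\<^sub>R comb L F x"
          by (simp add: scaleR_add_right mult_scaleR_right)
        then show ?thesis using norm_triangle_ineq by (metis norm_mult)
      qed
      also have "\<dots> \<le> norm (fst p) * B1 + B2"
        by (intro add_mono mult_left_mono B1 B2) auto
      finally show ?thesis .
    qed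
    then show "bounded (range (\<lambda>x. ((1 + norm x) ^ m) *\<^sub>R (fst p * iter_deriv (snd p) F x + comb L F x)))"
      unfolding bnd_iff by blast
  qed
qed

lemma norm_ee[simp]: "norm (ee w t) = 1" by (simp add: ee_def)

lemma good_ee:
  assumes "good f" shows "good (\<lambda>t. ee w t * f t)"
  unfolding good_def
proof safe
  fix x
  have "((\<lambda>t. 2*pi*(w \<bullet> t)) has_derivative (\<lambda>h. 2*pi*(w \<bullet> h))) (at x)"
    by (auto intro!: derivative_eq_intros)
  from has_derivative_cis[OF this] have "(\<lambda>t. ee w t) differentiable (at x)"
    unfolding ee_def differentiable_def by blast
  then show "(\<lambda>t. ee w t * f t) differentiable (at x)"
    using assms unfolding good_def by (auto intro!: derivative_intros)
next
  fix m
  obtain B where B: "\<And>x. norm (((1 + norm x) ^ m) *\<^sub>R f x) \<le> B"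
    using assms unfolding good_def bnd_iff by blast
  have "norm (((1 + norm x) ^ m) *\<^sub>R (ee w x * f x)) = norm (((1 + norm x) ^ m) *\<^sub>R f x)" for x
    by (simp add: norm_mult)
  then show "bounded (range (\<lambda>x. ((1 + norm x) ^ m) *\<^sub>R (ee w x * f x)))"
    unfolding bnd_iff using B by metis
qed

lemma schwartz_modul: "schwartz F \<Longrightarrow> schwartz (modul w F)"
proof -
  assume F: "schwartz F"
  show ?thesis unfolding schwartz_good[of "modul w F"]
  proof safe
    fix vs :: "(real^'a) list" assume "set vs \<subseteq> Basis"
    then obtain L where L: "\<forall>p\<in>set L. set (snd p) \<subseteq> Basis"
      and eq: "iter_deriv vs (modul w F) = (\<lambda>t. ee w t * comb L F t)"
      using iter_deriv_modul[OF F] by blast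
    show "good (iter_deriv vs (modul w F))" unfolding eq
      by (rule good_ee[OF good_comb[OF F L]])
  qed
qed

lemma schwartz_rho: "schwartz F \<Longrightarrow> schwartz (rho l F)"
  by (simp add: rho_def schwartz_transl schwartz_modul)



lemma rho_apply: "rho l F t = cis (2*pi*(snd l \<bullet> (t - (1/2) *\<^sub>R fst l))) * F (t - fst l)"
proof -
  have "t - (1/2) *\<^sub>R fst l - (1/2) *\<^sub>R fst l = t - fst l"
    by (simp add: algebra_simps flip: scaleR_add_left)
  then show ?thesis by (simp add: rho_def transl_def modul_def)
qed

definition th :: "(real^('n::finite)) \<times> (real^'n) \<Rightarrow> (real^'n) \<times> (real^'n) \<Rightarrow> real" where
  "th a b = pi * (snd a \<bullet> fst b - snd b \<bullet> fst a)"

lemma rho_comp: "rho a (rho b F) = (\<lambda>t. cis (th a b) * rho (a + b) F t)"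
proof
  fix t
  have "2*pi*(snd a \<bullet> (t - (1/2) *\<^sub>R fst a)) + 2*pi*(snd b \<bullet> (t - fst a - (1/2) *\<^sub>R fst b))
    = th a b + 2*pi*((snd a + snd b) \<bullet> (t - (1/2) *\<^sub>R (fst a + fst b)))"
    by (simp add: th_def inner_diff_right inner_add_left inner_add_right inner_commute algebra_simps)
  then have "cis (2*pi*(snd a \<bullet> (t - (1/2) *\<^sub>R fst a))) * cis (2*pi*(snd b \<bullet> (t - fst a - (1/2) *\<^sub>R fst b)))
    = cis (th a b) * cis (2*pi*((snd a + snd b) \<bullet> (t - (1/2) *\<^sub>R (fst a + fst b))))"
    by (simp only: cis_mult)
  moreover have "t - fst a - fst b = t - (fst a + fst b)" by simp
  ultimately show "rho a (rho b F) t = cis (th a b) * rho (a + b) F t"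
    unfolding rho_apply fst_add snd_add by (simp only: mult.assoc[symmetric])
qed

lemma rho_zero: "rho 0 F = F"
  by (rule ext) (simp add: rho_apply)

lemma th_neg: "th a (- a) = 0"
  by (simp add: th_def inner_commute)

lemma rho_inv: "rho a (rho (- a) F) = F"
  by (simp add: rho_comp th_neg rho_zero)



definition st :: "(real^('n::finite)) \<times> (real^'n) \<Rightarrow> (real^'n) \<times> (real^'n)" where
  "st p = (- fst p, snd p)"

lemma st_add: "st (a + b) = st a + st b" by (simp add: st_def)
lemma st_zero: "st 0 = 0" by (simp add: st_def zero_prod_def)

lemma rho_comp': "rho (a + b) F = (\<lambda>t. cis (- th a b) * rho a (rho b F) t)"
  by (rule ext) (simp add: rho_comp mult.assoc[symmetric] cis_mult)

lemma rho_swap: "rho a (rho b F) = (\<lambda>t. cis (th a b - th b a) * rho b (rho a F) t)"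
proof
  fix t
  have "rho b (rho a F) t = cis (th b a) * rho (a + b) F t" by (simp add: rho_comp add.commute)
  then have "cis (th a b - th b a) * rho b (rho a F) t = (cis (th a b - th b a) * cis (th b a)) * rho (a + b) F t"
    by simp
  also have "cis (th a b - th b a) * cis (th b a) = cis (th a b)" by (simp add: cis_mult)
  finally show "rho a (rho b F) t = cis (th a b - th b a) * rho b (rho a F) t" by (simp add: rho_comp)
qed

theorem lemma4p4:
  fixes T :: "'n::finite fn \<Rightarrow> 'n distr"
    and \<Phi> :: "(real^'n) \<times> (real^'n) \<Rightarrow> (real^'n) \<times> (real^'n)"
  assumes "even CARD('n)"
    and "cont_lin_op T"
    and "\<exists>F g. schwartz F \<and> schwartz g \<and> T F g \<noteq> 0"
    and "\<forall>l. \<exists>c. \<forall>F. schwartz F \<longrightarrow>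
           distr_eq (T (rho l F)) (\<lambda>g. c * rho_distr (\<Phi> l) (T F) g)"
  shows "inj (quot_map (H_of T) \<circ> \<Phi>)"
proof -
  obtain F0 g0 where F0: "schwartz F0" and g0: "schwartz g0" and nz: "T F0 g0 \<noteq> 0"
    using assms(3) by blast
  have "\<forall>l. \<exists>c. \<forall>F g. schwartz F \<longrightarrow> schwartz g \<longrightarrow> T (rho l F) g = c * T F (rho (st (\<Phi> l)) g)"
    using assms(4) unfolding distr_eq_def rho_distr_def st_def by blast
  then obtain C where C: "\<And>l F g. schwartz F \<Longrightarrow> schwartz g \<Longrightarrow>
      T (rho l F) g = C l * T F (rho (st (\<Phi> l)) g)" by metis
  have lin: "T (\<lambda>t. a * F t) g = a * T F g" if "schwartz F" "schwartz g" for a F g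
  proof -
    have "distr_eq (T (\<lambda>t. a * F t + 0 * F t)) (\<lambda>g. a * T F g + 0 * T F g)"
      using assms(2) that unfolding cont_lin_op_def by blast
    then show ?thesis using that unfolding distr_eq_def by simp
  qed
  have tlin: "T F (\<lambda>t. a * g t) = a * T F g" if "schwartz F" "schwartz g" for a F g
  proof -
    have "tempered (T F)" using assms(2) that unfolding cont_lin_op_def by blast
    then have "T F (\<lambda>t. a * g t + 0 * g t) = a * T F g + 0 * T F g"
      using that unfolding tempered_def by blast
    then show ?thesis by simp
  qed
  have Cnz: "C l \<noteq> 0" for l
  proof
    assume "C l = 0"
    then have "T (rho l (rho (- l) F0)) g0 = 0" using C[OF schwartz_rho[OF F0] g0] by simp
    then show False using nz by (simp add: rho_inv)
  qed
  show ?thesis unfolding inj_def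
  proof (intro allI impI)
    fix l m assume eq: "(quot_map (H_of T) \<circ> \<Phi>) l = (quot_map (H_of T) \<circ> \<Phi>) m"
    have "0 \<in> H_of T"
      unfolding H_of_def distr_eq_def rho_distr_def
      by (rule CollectI, rule exI[of _ 1]) (simp add: rho_zero flip: zero_prod_def)
    then have "\<Phi> l \<in> quot_map (H_of T) (\<Phi> l)" unfolding quot_map_def by force
    with eq obtain h where hH: "h \<in> H_of T" and hl: "\<Phi> l = \<Phi> m + h"
      unfolding quot_map_def by auto
    from hH obtain ch where ch: "\<And>F g. schwartz F \<Longrightarrow> schwartz g \<Longrightarrow>
        T F (rho (st h) g) = ch * T F g"
      unfolding H_of_def distr_eq_def rho_distr_def st_def by blast
    define k where "k = cis (- th (st h) (st (\<Phi> m)))"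
    define K where "K = C l * k * ch"
    have step1: "C m * T (rho l F) g = K * T (rho m F) g" if F: "schwartz F" and g: "schwartz g" for F g
    proof -
      have sg: "schwartz (rho (st (\<Phi> m)) g)" using g schwartz_rho by blast
      have "T (rho l F) g = C l * T F (rho (st h + st (\<Phi> m)) g)"
        using C[OF F g] by (simp add: hl st_add add.commute)
      also have "rho (st h + st (\<Phi> m)) g = (\<lambda>t. k * rho (st h) (rho (st (\<Phi> m)) g) t)"
        unfolding k_def by (rule rho_comp')
      also have "T F \<dots> = k * T F (rho (st h) (rho (st (\<Phi> m)) g))"
        using tlin F schwartz_rho[OF sg] by blast
      also have "T F (rho (st h) (rho (st (\<Phi> m)) g)) = ch * T F (rho (st (\<Phi> m)) g)"
        using ch F sg by blast
      finally have "T (rho l F) g = C l * (k * (ch * T F (rho (st (\<Phi> m)) g)))" .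
      moreover have "T (rho m F) g = C m * T F (rho (st (\<Phi> m)) g)" using C F g by blast
      ultimately show ?thesis unfolding K_def by (simp add: algebra_simps)
    qed
    define nu where "nu = l - m"
    define k1 where "k1 = cis (th l (- m))"
    define D where "D = K / (C m * k1)"
    have CK: "C m * k1 \<noteq> 0" using Cnz by (simp add: k1_def)
    have step2: "T (rho nu F) g = D * T F g" if F: "schwartz F" and g: "schwartz g" for F g
    proof -
      have sF: "schwartz (rho (- m) F)" using F schwartz_rho by blast
      have "rho l (rho (- m) F) = (\<lambda>t. k1 * rho nu F t)"
        unfolding k1_def nu_def by (simp add: rho_comp)
      then have "C m * (k1 * T (rho nu F) g) = K * T F g"
        using step1[OF sF g] lin[OF schwartz_rho[OF F] g] by (simp add: rho_inv)
      then have "(C m * k1) * T (rho nu F) g = K * T F g" by (simp add: mult.assoc)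
      then show ?thesis unfolding D_def using CK by (simp add: field_simps)
    qed
    have Dnz: "D \<noteq> 0"
    proof
      assume "D = 0"
      then have "T (rho nu (rho (- nu) F0)) g0 = 0" using step2[OF schwartz_rho[OF F0] g0] by simp
      then show False using nz by (simp add: rho_inv)
    qed
    have cis1: "cis (th nu kp - th kp nu) = 1" for kp
    proof -
      define F where "F = rho (- kp) F0"
      have sF: "schwartz F" unfolding F_def using F0 schwartz_rho by blast
      have X: "T (rho kp F) g0 = T F0 g0" unfolding F_def by (simp add: rho_inv)
      have i: "T (rho nu (rho kp F)) g0 = D * T F0 g0"
        using step2[OF schwartz_rho[OF sF] g0] X by simp
      have "T (rho nu (rho kp F)) g0 = cis (th nu kp - th kp nu) * T (rho kp (rho nu F)) g0"
        unfolding rho_swap[of nu kp F] using lin schwartz_rho sF g0 by blast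
      also have "T (rho kp (rho nu F)) g0 = C kp * T (rho nu F) (rho (st (\<Phi> kp)) g0)"
        using C schwartz_rho sF g0 by blast
      also have "T (rho nu F) (rho (st (\<Phi> kp)) g0) = D * T F (rho (st (\<Phi> kp)) g0)"
        using step2 schwartz_rho sF g0 by blast
      also have "C kp * (D * T F (rho (st (\<Phi> kp)) g0)) = D * T (rho kp F) g0"
        using C sF g0 by simp
      finally have "D * T F0 g0 = cis (th nu kp - th kp nu) * (D * T F0 g0)" using i X by simp
      then show ?thesis using Dnz nz by simp
    qed
    have "nu = 0"
    proof (rule ccontr)
      assume nz0: "nu \<noteq> 0"
      define N where "N = snd nu \<bullet> snd nu + fst nu \<bullet> fst nu"
      have "N > 0"
      proof -
        have "fst nu \<noteq> 0 \<or> snd nu \<noteq> 0" using nz0 by (simp add: prod_eq_iff)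
        then show ?thesis unfolding N_def
          by (metis add_nonneg_pos add_pos_nonneg inner_ge_zero inner_gt_zero_iff)
      qed
      define s where "s = 1 / (2 * N)"
      define kp where "kp = (s *\<^sub>R snd nu, - (s *\<^sub>R fst nu))"
      have "th nu kp - th kp nu = 2 * pi * (s * N)"
        unfolding th_def kp_def N_def by (simp add: algebra_simps inner_commute)
      also have "s * N = 1/2" unfolding s_def using \<open>N > 0\<close> by simp
      finally have "th nu kp - th kp nu = pi" by simp
      then show False using cis1[of kp] by simp
    qed
    then show "l = m" unfolding nu_def by simp
  qed
qed

end
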